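(* Let $\mu>0$ and $0<\beta<1$. Let $g:\mathbb{C}\to\mathbb{R}$ be given by $g(x)=\frac{\mu+|x|^2}{2}$ for $|x|\ge\sqrt{\mu}$ and $g(x)=\sqrt{\mu}|x|$ for $|x|\le\sqrt{\mu}$. Suppose $z_0\in\partial g(x_0)$ and $|z_0|<\beta^2\sqrt{\mu}$. Then for all $x_1\in\mathbb{C}$ with $x_1\neq x_0$ and all $z_1\in\partial g(x_1)$, $$\mathrm{Re}\big((z_1-z_0)\overline{(x_1-x_0)}\big)>(1-\beta^2)|x_1-x_0|^2.$$
   Context: $\partial g$ is the convex subdifferential (with $\mathbb{C}$ regarded as $\mathbb{R}^2$ with inner product $\mathrm{Re}(z\bar w)$); explicitly $\partial g(x)=\{x\}$ if $|x|\ge\sqrt\mu$, $\partial g(x)=\{\sqrt{\mu}\,x/|x|\}$ if $0<|x|\le\sqrt\mu$, and $\partial g(0)=\sqrt{\mu}\,\mathbb{D}$, where $\mathbb{D}$ is the closed unit disc. (In the paper $\beta$ is the constant $\beta_N=\inf\{\|Ax\|_2/\|x\|_2:x\ne0,\mathrm{card}(x)\le N\}$ of a matrix $A$, assumed to satisfy $0<\beta_N<1$; only its value matters here.) *)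

theory Defs
  imports "HOL-Analysis.Analysis"
begin

definition gfun :: "real \<Rightarrow> complex \<Rightarrow> real" where
  "gfun \<mu> x = (if cmod x \<ge> sqrt \<mu> then (\<mu> + (cmod x)^2) / 2 else sqrt \<mu> * cmod x)"

text \<open>Convex subdifferential of f : C \<rightarrow> R, with C regarded as R^2 with
  inner product Re(z * cnj w).\<close>
definition subdiff :: "(complex \<Rightarrow> real) \<Rightarrow> complex \<Rightarrow> complex set" where
  "subdiff f x = {z. \<forall>y. f y \<ge> f x + Re (z * cnj (y - x))}"

end

theory Submission
  imports Defs
begin

lemma g_ge:
  assumes "\<mu> > 0"
  shows "gfun \<mu> x \<ge> sqrt \<mu> * cmod x"
proof (cases "cmod x \<ge> sqrt \<mu>")
  case True
  have "(sqrt \<mu> - cmod x)^2 \<ge> 0" by simp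
  moreover have "(sqrt \<mu>)^2 = \<mu>" using assms by simp
  ultimately have "\<mu> + (cmod x)^2 \<ge> 2 * (sqrt \<mu> * cmod x)"
    by (simp add: power2_eq_square algebra_simps)
  then show ?thesis using True by (simp add: gfun_def)
next
  case False
  then show ?thesis by (simp add: gfun_def)
qed

lemma re_le: "Re (z * cnj w) \<le> cmod z * cmod w"
  by (metis complex_Re_le_cmod complex_mod_cnj norm_mult)

lemma sub0:
  assumes "\<mu> > 0" "z \<in> subdiff (gfun \<mu>) x"
  shows "Re (z * cnj x) \<ge> gfun \<mu> x"
proof -
  have "gfun \<mu> 0 \<ge> gfun \<mu> x + Re (z * cnj (0 - x))"
    using assms(2) unfolding subdiff_def by blast
  moreover have "gfun \<mu> 0 = 0" using assms(1) by (simp add: gfun_def)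
  ultimately show ?thesis by simp
qed

lemma big:
  assumes "\<mu> > 0" "z \<in> subdiff (gfun \<mu>) x" "cmod x > sqrt \<mu>" "0 < t"
    "(1 - t) * cmod x \<ge> sqrt \<mu>"
  shows "t * Re (z * cnj x) \<ge> (cmod x)^2 * t * (2 - t) / 2"
proof -
  let ?r = "cmod x"
  have sp: "sqrt \<mu> > 0" using assms(1) by simp
  have t1: "1 - t > 0"
  proof (rule ccontr)
    assume "\<not> 1 - t > 0"
    then have "(1 - t) * ?r \<le> 0" by (simp add: mult_nonpos_nonneg)
    then show False using assms(5) sp by linarith
  qed
  define y where "y = of_real (1 - t) * x"
  have "gfun \<mu> y \<ge> gfun \<mu> x + Re (z * cnj (y - x))"
    using assms(2) unfolding subdiff_def by blast
  moreover have "y - x = - (of_real t * x)" by (simp add: y_def algebra_simps)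
  moreover have "cmod y = (1 - t) * ?r"
  proof -
    have "cmod y = abs (1 - t) * ?r" unfolding y_def norm_mult norm_of_real by (rule refl)
    then show ?thesis using t1 by simp
  qed
  ultimately have A: "gfun \<mu> y \<ge> gfun \<mu> x + Re (z * cnj (- (of_real t * x)))"
    and B: "cmod y = (1 - t) * ?r" by auto
  have C: "Re (z * cnj (- (of_real t * x))) = - t * Re (z * cnj x)"
    by (simp add: algebra_simps)
  have D: "gfun \<mu> y = (\<mu> + ((1 - t) * ?r)^2) / 2" using B assms(5) by (simp add: gfun_def)
  have E: "gfun \<mu> x = (\<mu> + ?r^2) / 2" using assms(3) by (simp add: gfun_def)
  have "(\<mu> + ((1 - t) * ?r)^2) / 2 \<ge> (\<mu> + ?r^2) / 2 - t * Re (z * cnj x)"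
    using A C D E by linarith
  moreover have "\<And>m a R t::real. (m + ((1-t)*a)^2)/2 \<ge> (m+a^2)/2 - t*R \<Longrightarrow> t*R \<ge> a^2*t*(2-t)/2"
    by (simp add: power2_eq_square field_simps)
  ultimately show ?thesis by blast
qed

theorem lemma4p4:
  fixes \<mu> \<beta> :: real and x0 z0 :: complex
  assumes "\<mu> > 0" and "0 < \<beta>" and "\<beta> < 1"
    and "z0 \<in> subdiff (gfun \<mu>) x0"
    and "cmod z0 < \<beta>^2 * sqrt \<mu>"
  shows "\<forall>x1 z1. x1 \<noteq> x0 \<longrightarrow> z1 \<in> subdiff (gfun \<mu>) x1 \<longrightarrow>
           Re ((z1 - z0) * cnj (x1 - x0)) > (1 - \<beta>^2) * (cmod (x1 - x0))^2"
proof (intro allI impI)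
  fix x1 z1
  assume ne: "x1 \<noteq> x0" and z1: "z1 \<in> subdiff (gfun \<mu>) x1"
  let ?s = "sqrt \<mu>"
  have sp: "?s > 0" using assms(1) by simp
  have b2: "\<beta>^2 < 1" "\<beta>^2 > 0" using assms(2,3)
    by (simp_all add: power_less_one_iff)
  have x0: "x0 = 0"
  proof (rule ccontr)
    assume "x0 \<noteq> 0"
    then have r0: "cmod x0 > 0" by simp
    have "Re (z0 * cnj x0) \<ge> ?s * cmod x0"
      using sub0[OF assms(1,4)] g_ge[OF assms(1)] by (meson order_trans)
    moreover have "Re (z0 * cnj x0) \<le> cmod z0 * cmod x0" by (rule re_le)
    moreover have "cmod z0 < ?s" using assms(5) b2 sp
      by (smt (verit) mult_less_cancel_right2)
    ultimately show False using r0 by (smt (verit) mult_strict_right_mono)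
  qed
  let ?r = "cmod x1"
  have rp: "?r > 0" using ne x0 by simp
  have z0b: "Re (z0 * cnj x1) < \<beta>^2 * ?s * ?r"
    using re_le[of z0 x1] assms(5) rp by (smt (verit) mult_strict_right_mono)
  have key: "Re (z1 * cnj x1) \<ge> ?r^2 - \<beta>^2 * ?r * (?r - ?s)"
  proof (cases "?r \<le> ?s")
    case True
    have "Re (z1 * cnj x1) \<ge> ?s * ?r"
      using sub0[OF assms(1) z1] g_ge[OF assms(1)] by (meson order_trans)
    moreover have "?s * ?r \<ge> ?r^2 - \<beta>^2 * ?r * (?r - ?s)"
    proof -
      have "\<beta>^2 * ?r * (?s - ?r) \<le> ?r * (?s - ?r)"
        using b2 True rp by (intro mult_right_mono) auto
      then show ?thesis by (simp add: power2_eq_square algebra_simps)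
    qed
    ultimately show ?thesis by linarith
  next
    case False
    define t where "t = \<beta>^2 * (?r - ?s) / ?r"
    have tp: "t > 0" using False b2 rp by (simp add: t_def)
    have "t \<le> (?r - ?s) / ?r" unfolding t_def using b2 False rp
      by (intro divide_right_mono) auto
    then have "t * ?r \<le> ?r - ?s" using rp by (simp add: le_divide_eq)
    then have "(1 - t) * ?r \<ge> ?s" by (simp add: algebra_simps)
    from big[OF assms(1) z1 _ tp this] False
    have "t * Re (z1 * cnj x1) \<ge> ?r^2 * t * (2 - t) / 2" by simp
    then have "Re (z1 * cnj x1) \<ge> ?r^2 * (2 - t) / 2" using tp
      by (smt (verit) mult_le_cancel_left_pos mult.commute times_divide_eq_right mult.assoc)
    moreover have "?r^2 * (2 - t) / 2 \<ge> ?r^2 - \<beta>^2 * ?r * (?r - ?s)"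
    proof -
      have "?r^2 * t = \<beta>^2 * ?r * (?r - ?s)" using rp
        by (simp add: t_def power2_eq_square field_simps)
      moreover have "\<beta>^2 * ?r * (?r - ?s) \<ge> 0" using False rp by simp
      ultimately show ?thesis by (simp add: algebra_simps)
    qed
    ultimately show ?thesis by linarith
  qed
  have "Re ((z1 - z0) * cnj x1) = Re (z1 * cnj x1) - Re (z0 * cnj x1)"
    by (simp add: algebra_simps)
  moreover have "?r^2 - \<beta>^2 * ?r * (?r - ?s) - \<beta>^2 * ?s * ?r = (1 - \<beta>^2) * ?r^2"
    by (simp add: power2_eq_square algebra_simps)
  ultimately show "Re ((z1 - z0) * cnj (x1 - x0)) > (1 - \<beta>^2) * (cmod (x1 - x0))^2"
    using key z0b x0 by simp
qed

end
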